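(* Let $X$ be a $d$-dimensional simplicial complex and let $c$ be a proper coloring of the vertices of $X$ such that no two $(d-1)$-dimensional faces of $X$ have the same pattern. Then $H_{d-1}(X)_T \cong H_{d-1}((X,c))_T$.
   Context: Homology has integer coefficients; $A_T$ denotes the torsion subgroup of an abelian group $A$. A coloring $c$ of $V(X)$ is proper if no two vertices joined by an edge of $X$ receive the same color. The pattern of a face is the multiset of colors of its vertices. For a proper coloring $c$, the pattern complex $(X,c)$ is the simplicial complex on the set of colors of $c$ in which a set $S$ of colors is a face if and only if $S$ is the pattern of some face of $X$. *)

theory Defs
  imports "HOL-Algebra.Algebra" "HOL-Library.Multiset"
begin

definition simplicial_complex :: "'a set set \<Rightarrow> bool" where
  "simplicial_complex K \<longleftrightarrow> finite K \<and> (\<forall>s\<in>K. finite s) \<and> (\<forall>s\<in>K. \<forall>t. t \<subseteq> s \<longrightarrow> t \<in> K)"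

definition vertices :: "'a set set \<Rightarrow> 'a set" where
  "vertices K = \<Union>K"

definition dimension_is :: "'a set set \<Rightarrow> nat \<Rightarrow> bool" where
  "dimension_is K d \<longleftrightarrow> (\<exists>s\<in>K. card s = d + 1) \<and> (\<forall>s\<in>K. card s \<le> d + 1)"

text \<open>k-dimensional faces (k an integer; no faces in negative dimension, so homology is unreduced).\<close>
definition kfaces :: "'a set set \<Rightarrow> int \<Rightarrow> 'a set set" where
  "kfaces K k = {s\<in>K. s \<noteq> {} \<and> int (card s) = k + 1}"

text \<open>Oriented simplices are oriented by the increasing order of vertices.\<close>

definition chain_group :: "'a set set \<Rightarrow> int \<Rightarrow> ('a set \<Rightarrow> int) monoid" where
  "chain_group K k = \<lparr>carrier = {f. \<forall>s. s \<notin> kfaces K k \<longrightarrow> f s = 0},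
                      monoid.mult = (\<lambda>f g s. f s + g s), monoid.one = (\<lambda>_. 0)\<rparr>"

definition boundary :: "'a::linorder set set \<Rightarrow> int \<Rightarrow> ('a set \<Rightarrow> int) \<Rightarrow> ('a set \<Rightarrow> int)" where
  "boundary K k f = (\<lambda>t. if t \<in> kfaces K (k - 1)
      then (\<Sum>s\<in>{s\<in>kfaces K k. t \<subseteq> s}.
              (-1) ^ card {u\<in>s. u < the_elem (s - t)} * f s)
      else 0)"

definition cycles :: "'a::linorder set set \<Rightarrow> int \<Rightarrow> ('a set \<Rightarrow> int) set" where
  "cycles K k = {f\<in>carrier (chain_group K k). boundary K k f = (\<lambda>_. 0)}"

definition boundaries :: "'a::linorder set set \<Rightarrow> int \<Rightarrow> ('a set \<Rightarrow> int) set" where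
  "boundaries K k = boundary K (k + 1) ` carrier (chain_group K (k + 1))"

definition homology :: "'a::linorder set set \<Rightarrow> int \<Rightarrow> ('a set \<Rightarrow> int) set monoid" where
  "homology K k = (chain_group K k)\<lparr>carrier := cycles K k\<rparr> Mod boundaries K k"

definition torsion_subgroup :: "('a, 'b) monoid_scheme \<Rightarrow> ('a, 'b) monoid_scheme" where
  "torsion_subgroup G = G\<lparr>carrier := {x\<in>carrier G. \<exists>n::nat. n > 0 \<and> x [^]\<^bsub>G\<^esub> n = \<one>\<^bsub>G\<^esub>}\<rparr>"

definition proper_coloring :: "'a set set \<Rightarrow> ('a \<Rightarrow> 'b) \<Rightarrow> bool" where
  "proper_coloring K c \<longleftrightarrow> (\<forall>u v. {u, v} \<in> K \<and> u \<noteq> v \<longrightarrow> c u \<noteq> c v)"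

definition pattern :: "('a \<Rightarrow> 'b) \<Rightarrow> 'a set \<Rightarrow> 'b multiset" where
  "pattern c s = image_mset c (mset_set s)"

definition pattern_complex :: "'a set set \<Rightarrow> ('a \<Rightarrow> 'b) \<Rightarrow> 'b set set" where
  "pattern_complex K c = {S. finite S \<and> (\<exists>s\<in>K. mset_set S = pattern c s)}"

end

theory Submission
  imports Defs
begin


definition smul :: "nat \<Rightarrow> ('x \<Rightarrow> int) \<Rightarrow> ('x \<Rightarrow> int)" where
  "smul n f = (\<lambda>s. int n * f s)"

lemma cg_carrier: "carrier (chain_group K k) = {f. \<forall>s. s \<notin> kfaces K k \<longrightarrow> f s = 0}"
  by (simp add: chain_group_def)
lemma cg_mult: "x \<otimes>\<^bsub>chain_group K k\<^esub> y = (\<lambda>s. x s + y s)"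
  by (simp add: chain_group_def)
lemma cg_one: "\<one>\<^bsub>chain_group K k\<^esub> = (\<lambda>_. 0)"
  by (simp add: chain_group_def)

lemma cg_comm_group: "comm_group (chain_group K k)"
proof (rule comm_groupI)
  fix x assume "x \<in> carrier (chain_group K k)"
  then show "\<exists>y\<in>carrier (chain_group K k). y \<otimes>\<^bsub>chain_group K k\<^esub> x = \<one>\<^bsub>chain_group K k\<^esub>"
    by (intro bexI[of _ "\<lambda>s. - x s"]) (auto simp: cg_carrier cg_mult cg_one)
qed (auto simp: cg_carrier cg_mult cg_one add.assoc add.commute)

lemma cg_group: "group (chain_group K k)"
  using cg_comm_group comm_group_def by blast

lemma boundary_add: "boundary K k (\<lambda>s. f s + g s) = (\<lambda>t. boundary K k f t + boundary K k g t)"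
  by (auto simp: boundary_def fun_eq_iff sum.distrib algebra_simps)

lemma boundary_smul: "boundary K k (smul n f) = smul n (boundary K k f)"
  by (auto simp: boundary_def fun_eq_iff smul_def sum_distrib_left algebra_simps)

lemma boundary_hom: "boundary K k \<in> hom (chain_group K k) (chain_group K (k - 1))"
  by (auto simp: hom_def cg_carrier cg_mult boundary_add) (auto simp: boundary_def)

lemma boundaries_subgroup: "subgroup (boundaries K k) (chain_group K k)"
proof -
  interpret gh: group_hom "chain_group K (k+1)" "chain_group K k" "boundary K (k+1)"
    using boundary_hom[of K "k+1"] cg_comm_group
    by (simp add: group_hom_def group_hom_axioms_def cg_group)
  show ?thesis using gh.img_is_subgroup by (simp add: boundaries_def)
qed

lemma boundaries_normal: "boundaries K k \<lhd> chain_group K k"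
  using comm_group.subgroup_imp_normal[OF cg_comm_group boundaries_subgroup] .

lemma smul_carrier: "f \<in> carrier (chain_group K k) \<Longrightarrow> smul n f \<in> carrier (chain_group K k)"
  by (simp add: cg_carrier smul_def)

lemma hom_carrier: "carrier (homology K k) =
   {r_coset (chain_group K k) (boundaries K k) f | f. f \<in> cycles K k}"
  by (auto simp: homology_def FactGroup_def RCOSETS_def r_coset_def chain_group_def)

lemma hom_mult: "x \<otimes>\<^bsub>homology K k\<^esub> y = set_mult (chain_group K k) x y"
  by (simp add: homology_def FactGroup_def set_mult_def chain_group_def)

lemma hom_one: "\<one>\<^bsub>homology K k\<^esub> = boundaries K k"
  by (simp add: homology_def FactGroup_def)

lemma cycles_sub: "cycles K k \<subseteq> carrier (chain_group K k)"
  by (auto simp: cycles_def)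

lemma hom_pow:
  assumes "f \<in> carrier (chain_group K k)"
  shows "(r_coset (chain_group K k) (boundaries K k) f) [^]\<^bsub>homology K k\<^esub> n
        = r_coset (chain_group K k) (boundaries K k) (smul n f)"
proof (induction n)
  case 0
  interpret G: comm_group "chain_group K k" by (rule cg_comm_group)
  have "smul 0 f = \<one>\<^bsub>chain_group K k\<^esub>" by (simp add: smul_def cg_one)
  then show ?case using G.coset_mult_one[OF subgroup.subset[OF boundaries_subgroup]]
    by (simp add: hom_one)
next
  case (Suc n)
  interpret N: normal "boundaries K k" "chain_group K k" by (rule boundaries_normal)
  have "smul (Suc n) f = smul n f \<otimes>\<^bsub>chain_group K k\<^esub> f"
    by (simp add: smul_def cg_mult fun_eq_iff algebra_simps)
  then show ?case using Suc N.rcos_sum[OF smul_carrier[OF assms] assms]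
    by (simp add: hom_mult)
qed

lemma torsion_carrier:
  assumes dd: "\<And>h. boundary K k (boundary K (k+1) h) = (\<lambda>_. 0)"
  shows "carrier (torsion_subgroup (homology K k)) =
    {r_coset (chain_group K k) (boundaries K k) f | f. f \<in> carrier (chain_group K k)
        \<and> (\<exists>n::nat. n > 0 \<and> smul n f \<in> boundaries K k)}"
proof -
  interpret G: comm_group "chain_group K k" by (rule cg_comm_group)
  have sg: "subgroup (boundaries K k) (chain_group K k)" by (rule boundaries_subgroup)
  have key: "f \<in> cycles K k" if H: "f \<in> carrier (chain_group K k)" "n > 0"
    "smul n f \<in> boundaries K k" for f n
  proof -
    obtain h where "smul n f = boundary K (k+1) h" using H(3) by (auto simp: boundaries_def)
    then have "smul n (boundary K k f) = (\<lambda>_. 0)" using dd[of h] boundary_smul[of K k n f] by simp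
    then have "boundary K k f = (\<lambda>_. 0)" using H(2) by (auto simp: smul_def fun_eq_iff)
    then show ?thesis using H(1) by (simp add: cycles_def)
  qed
  show ?thesis
  proof (rule Set.set_eqI, rule iffI)
    fix x assume "x \<in> carrier (torsion_subgroup (homology K k))"
    then obtain f and n::nat where x: "x = r_coset (chain_group K k) (boundaries K k) f" "f \<in> cycles K k"
      "n > 0" "x [^]\<^bsub>homology K k\<^esub> n = boundaries K k"
      by (simp add: torsion_subgroup_def hom_carrier hom_one) metis
    have fc: "f \<in> carrier (chain_group K k)" using x(2) cycles_sub by blast
    have "r_coset (chain_group K k) (boundaries K k) (smul n f) = boundaries K k"
      using x(4) hom_pow[OF fc] x(1) by simp
    then have "smul n f \<in> boundaries K k"
      using G.rcos_self[OF smul_carrier[OF fc, of n] sg] by simp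
    then show "x \<in> {r_coset (chain_group K k) (boundaries K k) f | f. f \<in> carrier (chain_group K k)
        \<and> (\<exists>n::nat. n > 0 \<and> smul n f \<in> boundaries K k)}" using x fc by blast
  next
    fix x assume "x \<in> {r_coset (chain_group K k) (boundaries K k) f | f. f \<in> carrier (chain_group K k)
        \<and> (\<exists>n::nat. n > 0 \<and> smul n f \<in> boundaries K k)}"
    then obtain f n where x: "x = r_coset (chain_group K k) (boundaries K k) f"
      "f \<in> carrier (chain_group K k)" "n > 0" "smul n f \<in> boundaries K k" by blast
    have "x [^]\<^bsub>homology K k\<^esub> n = boundaries K k"
      using hom_pow[OF x(2)] x(1) subgroup.rcos_const[OF sg G.is_group x(4)] by simp
    then show "x \<in> carrier (torsion_subgroup (homology K k))"
      using x key[OF x(2) x(3) x(4)] by (auto simp: torsion_subgroup_def hom_carrier hom_one)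
  qed
qed

lemma torsion_iso:
  fixes K :: "'a::linorder set set" and L :: "'b::linorder set set"
    and \<phi> :: "('a set \<Rightarrow> int) \<Rightarrow> ('b set \<Rightarrow> int)"
  assumes ddK: "\<And>h. boundary K k (boundary K (k+1) h) = (\<lambda>_. 0)"
      and ddL: "\<And>h. boundary L k (boundary L (k+1) h) = (\<lambda>_. 0)"
      and bij: "bij_betw \<phi> (carrier (chain_group K k)) (carrier (chain_group L k))"
      and add: "\<And>f g. f \<in> carrier (chain_group K k) \<Longrightarrow> g \<in> carrier (chain_group K k) \<Longrightarrow>
                  \<phi> (\<lambda>s. f s + g s) = (\<lambda>s. \<phi> f s + \<phi> g s)"
      and bd: "\<phi> ` boundaries K k = boundaries L k"
  shows "torsion_subgroup (homology K k) \<cong> torsion_subgroup (homology L k)"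
proof -
  define CK where "CK = chain_group K k"
  define CL where "CL = chain_group L k"
  define BK where "BK = boundaries K k"
  define BL where "BL = boundaries L k"
  interpret GK: comm_group CK unfolding CK_def by (rule cg_comm_group)
  interpret GL: comm_group CL unfolding CL_def by (rule cg_comm_group)
  interpret NK: normal BK CK unfolding CK_def BK_def by (rule boundaries_normal)
  interpret NL: normal BL CL unfolding CL_def BL_def by (rule boundaries_normal)
  have BKs: "BK \<subseteq> carrier CK" using NK.subset .
  have BLs: "BL \<subseteq> carrier CL" using NL.subset .
  have phiC: "\<phi> f \<in> carrier CL" if "f \<in> carrier CK" for f
    using bij that unfolding CK_def CL_def bij_betw_def by blast
  have inj: "inj_on \<phi> (carrier CK)" using bij unfolding CK_def bij_betw_def by blast
  have zc: "(\<lambda>_. 0) \<in> carrier CK" by (simp add: CK_def cg_carrier)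
  have phi0: "\<phi> (\<lambda>_. 0) = (\<lambda>_. 0)"
  proof -
    have "\<phi> (\<lambda>_. 0) = (\<lambda>s. \<phi> (\<lambda>_. 0) s + \<phi> (\<lambda>_. 0) s)"
      using add[OF zc[unfolded CK_def] zc[unfolded CK_def]] by simp
    then show ?thesis by (metis add_cancel_right_right)
  qed
  have phismul: "\<phi> (smul n f) = smul n (\<phi> f)" if f: "f \<in> carrier CK" for f n
  proof (induction n)
    case 0 then show ?case using phi0 by (simp add: smul_def)
  next
    case (Suc n)
    have "smul (Suc n) f = (\<lambda>s. smul n f s + f s)" by (simp add: smul_def algebra_simps)
    then have "\<phi> (smul (Suc n) f) = (\<lambda>s. \<phi> (smul n f) s + \<phi> f s)"
      using add[OF smul_carrier[OF f[unfolded CK_def]] f[unfolded CK_def]] by simp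
    then show ?case using Suc by (simp add: smul_def algebra_simps)
  qed
  have phicos: "\<phi> ` (BK #>\<^bsub>CK\<^esub> f) = BL #>\<^bsub>CL\<^esub> \<phi> f" if f: "f \<in> carrier CK" for f
  proof -
    have "\<phi> (h \<otimes>\<^bsub>CK\<^esub> f) = \<phi> h \<otimes>\<^bsub>CL\<^esub> \<phi> f" if "h \<in> BK" for h
      using add[of h f] that BKs f unfolding CK_def CL_def cg_mult by auto
    then have "\<phi> ` (\<Union>h\<in>BK. {h \<otimes>\<^bsub>CK\<^esub> f}) = (\<Union>h\<in>BK. {\<phi> h \<otimes>\<^bsub>CL\<^esub> \<phi> f})"
      by (simp add: image_UN)
    also have "\<dots> = (\<Union>h\<in>\<phi> ` BK. {h \<otimes>\<^bsub>CL\<^esub> \<phi> f})" by (simp add: SUP_image comp_def)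
    finally show ?thesis unfolding r_coset_def BL_def BK_def bd[symmetric] .
  qed
  have TK: "carrier (torsion_subgroup (homology K k)) =
    {BK #>\<^bsub>CK\<^esub> f | f. f \<in> carrier CK \<and> (\<exists>n::nat. n > 0 \<and> smul n f \<in> BK)}"
    unfolding CK_def BK_def by (rule torsion_carrier[OF ddK])
  have TL: "carrier (torsion_subgroup (homology L k)) =
    {BL #>\<^bsub>CL\<^esub> f | f. f \<in> carrier CL \<and> (\<exists>n::nat. n > 0 \<and> smul n f \<in> BL)}"
    unfolding CL_def BL_def by (rule torsion_carrier[OF ddL])
  have multK: "x \<otimes>\<^bsub>torsion_subgroup (homology K k)\<^esub> y = x <#>\<^bsub>CK\<^esub> y" for x y
    by (simp add: torsion_subgroup_def hom_mult CK_def)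
  have multL: "x \<otimes>\<^bsub>torsion_subgroup (homology L k)\<^esub> y = x <#>\<^bsub>CL\<^esub> y" for x y
    by (simp add: torsion_subgroup_def hom_mult CL_def)
  have tor_img: "\<phi> f \<in> carrier CL \<and> (\<exists>n::nat. n > 0 \<and> smul n (\<phi> f) \<in> BL)"
    if "f \<in> carrier CK" "n > 0" "smul n f \<in> BK" for f n
  proof -
    have "smul n (\<phi> f) = \<phi> (smul n f)" using phismul[OF that(1)] by simp
    also have "\<dots> \<in> BL" using that(3) bd unfolding BK_def BL_def by blast
    finally show ?thesis using that phiC by blast
  qed
  have "(\<lambda>R. \<phi> ` R) \<in> iso (torsion_subgroup (homology K k)) (torsion_subgroup (homology L k))"
  proof -
    have hom: "(\<lambda>R. \<phi> ` R) \<in> hom (torsion_subgroup (homology K k)) (torsion_subgroup (homology L k))"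
    proof (rule homI)
      fix x assume "x \<in> carrier (torsion_subgroup (homology K k))"
      then obtain f and n :: nat where xf: "x = BK #>\<^bsub>CK\<^esub> f" "f \<in> carrier CK" "n > 0" "smul n f \<in> BK"
        unfolding TK by blast
      have "\<phi> ` x = BL #>\<^bsub>CL\<^esub> \<phi> f" using phicos[OF xf(2)] xf(1) by simp
      then show "\<phi> ` x \<in> carrier (torsion_subgroup (homology L k))"
        unfolding TL using tor_img[OF xf(2-4)] by blast
    next
      fix x y assume "x \<in> carrier (torsion_subgroup (homology K k))"
                     "y \<in> carrier (torsion_subgroup (homology K k))"
      then obtain f g where fg: "x = BK #>\<^bsub>CK\<^esub> f" "f \<in> carrier CK"
                          "y = BK #>\<^bsub>CK\<^esub> g" "g \<in> carrier CK"
        unfolding TK by blast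
      have "\<phi> ` (x \<otimes>\<^bsub>torsion_subgroup (homology K k)\<^esub> y) = \<phi> ` (BK #>\<^bsub>CK\<^esub> (f \<otimes>\<^bsub>CK\<^esub> g))"
        using NK.rcos_sum fg by (simp add: multK)
      also have "\<dots> = BL #>\<^bsub>CL\<^esub> (\<phi> f \<otimes>\<^bsub>CL\<^esub> \<phi> g)"
      proof -
        have "\<phi> (f \<otimes>\<^bsub>CK\<^esub> g) = \<phi> f \<otimes>\<^bsub>CL\<^esub> \<phi> g"
          using add[of f g] fg by (simp add: CK_def CL_def cg_mult)
        then show ?thesis using phicos[OF GK.m_closed[OF fg(2) fg(4)]] by simp
      qed
      also have "\<dots> = \<phi> ` x \<otimes>\<^bsub>torsion_subgroup (homology L k)\<^esub> \<phi> ` y"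
        using NL.rcos_sum phiC fg phicos by (simp add: multL)
      finally show "\<phi> ` (x \<otimes>\<^bsub>torsion_subgroup (homology K k)\<^esub> y) =
         \<phi> ` x \<otimes>\<^bsub>torsion_subgroup (homology L k)\<^esub> \<phi> ` y" .
    qed
    have injh: "inj_on (\<lambda>R. \<phi> ` R) (carrier (torsion_subgroup (homology K k)))"
    proof (rule inj_onI)
      fix x y assume xy: "x \<in> carrier (torsion_subgroup (homology K k))"
                     "y \<in> carrier (torsion_subgroup (homology K k))" and e: "\<phi> ` x = \<phi> ` y"
      have sub: "x \<subseteq> carrier CK" if "x \<in> carrier (torsion_subgroup (homology K k))" for x
        using that GK.r_coset_subset_G[OF BKs] unfolding TK by blast
      show "x = y" using inj_on_image_eq_iff[OF inj sub[OF xy(1)] sub[OF xy(2)]] e by simp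
    qed
    have surj: "carrier (torsion_subgroup (homology L k)) \<subseteq> (\<lambda>R. \<phi> ` R) ` carrier (torsion_subgroup (homology K k))"
    proof
      fix y assume "y \<in> carrier (torsion_subgroup (homology L k))"
      then obtain g and n :: nat where g: "y = BL #>\<^bsub>CL\<^esub> g" "g \<in> carrier CL" "n > 0" "smul n g \<in> BL"
        unfolding TL by blast
      have e: "\<phi> ` carrier CK = carrier CL" using bij_betw_imp_surj_on[OF bij] unfolding CK_def CL_def .
      have "g \<in> \<phi> ` carrier CK" using g(2) e by (simp only:)
      then obtain f where f: "f \<in> carrier CK" "\<phi> f = g" by (metis imageE)
      have "\<phi> (smul n f) \<in> \<phi> ` BK" using g(4) f phismul bd unfolding BK_def BL_def by simp
      then have "smul n f \<in> BK" using inj_on_image_mem_iff[OF inj smul_carrier[OF f(1)[unfolded CK_def], of n, folded CK_def] BKs] by blast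
      then have "BK #>\<^bsub>CK\<^esub> f \<in> carrier (torsion_subgroup (homology K k))" unfolding TK using f g(3) by blast
      moreover have "\<phi> ` (BK #>\<^bsub>CK\<^esub> f) = y" using phicos f g by simp
      ultimately show "y \<in> (\<lambda>R. \<phi> ` R) ` carrier (torsion_subgroup (homology K k))" by blast
    qed
    have "(\<lambda>R. \<phi> ` R) ` carrier (torsion_subgroup (homology K k)) \<subseteq> carrier (torsion_subgroup (homology L k))"
      using hom unfolding hom_def by blast
    with surj injh hom show ?thesis unfolding iso_def bij_betw_def by blast
  qed
  then show ?thesis unfolding is_iso_def by blast
qed



definition sg :: "'a::linorder set \<Rightarrow> 'a set \<Rightarrow> int" where
  "sg s r = (-1) ^ card {u\<in>s. u < the_elem (s - r)}"

lemma two_cancel_ab: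
  fixes a b :: "'a::linorder"
  assumes ft: "finite t" and at: "a \<notin> t" and bt: "b \<notin> t" and ab: "a < b"
  shows "sg (insert a t) t * sg (insert a (insert b t)) (insert a t)
       + sg (insert b t) t * sg (insert a (insert b t)) (insert b t) = 0"
proof -
  let ?s = "insert a (insert b t)"
  have e1: "insert a t - t = {a}" "insert b t - t = {b}" using at bt by auto
  have e2: "?s - insert a t = {b}" "?s - insert b t = {a}" using at bt ab by auto
  have c1: "{u\<in>insert a t. u < a} = {u\<in>t. u < a}" by auto
  have c2: "{u\<in>insert b t. u < b} = {u\<in>t. u < b}" by auto
  have c3: "{u\<in>?s. u < b} = insert a {u\<in>t. u < b}" using ab by auto
  have c4: "{u\<in>?s. u < a} = {u\<in>t. u < a}" using ab by auto
  have c5: "card (insert a {u\<in>t. u < b}) = Suc (card {u\<in>t. u < b})"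
    using ft at by (simp add: card_insert_if)
  show ?thesis unfolding sg_def e1 e2 the_elem_eq c1 c2 c3 c4 c5 by simp
qed

lemma two_cancel:
  fixes s t :: "'a::linorder set"
  assumes fs: "finite s" and ts: "t \<subseteq> s" and cs: "card s = card t + 2"
  shows "(\<Sum>r\<in>{r. t \<subseteq> r \<and> r \<subseteq> s \<and> card r = card t + 1}. sg r t * sg s r) = 0"
proof -
  have ft: "finite t" using fs ts finite_subset by blast
  have "card (s - t) = 2" using cs ts ft by (simp add: card_Diff_subset)
  then obtain x y where xy: "s - t = {x, y}" "x \<noteq> y" by (auto simp: card_2_iff)
  obtain a b where ab: "s - t = {a, b}" "a < b"
    using xy by (metis insert_commute linorder_neqE)
  have at: "a \<notin> t" "b \<notin> t" using ab(1) by auto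
  have s_eq: "s = insert a (insert b t)" using ab(1) ts by auto
  have R: "{r. t \<subseteq> r \<and> r \<subseteq> s \<and> card r = card t + 1} = {insert a t, insert b t}"
  proof (rule Set.set_eqI, rule iffI)
    fix r assume r: "r \<in> {r. t \<subseteq> r \<and> r \<subseteq> s \<and> card r = card t + 1}"
    then have fr: "finite r" using fs finite_subset by blast
    have tr: "t \<subseteq> r" using r by blast
    have "card (r - t) = card r - card t" using card_Diff_subset[OF finite_subset[OF tr fr] tr] .
    then have "card (r - t) = 1" using r by simp
    then obtain z where z: "r - t = {z}" by (rule card_1_singletonE)
    have "z \<in> {a, b}" using z r ab(1) by blast
    moreover have "r = insert z t" using z r by blast
    ultimately show "r \<in> {insert a t, insert b t}" by blast
  next
    fix r assume "r \<in> {insert a t, insert b t}"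
    then show "r \<in> {r. t \<subseteq> r \<and> r \<subseteq> s \<and> card r = card t + 1}"
      using s_eq at ft by auto
  qed
  have ne: "insert a t \<noteq> insert b t" using at ab(2) by auto
  show ?thesis unfolding R using ne two_cancel_ab[OF ft at ab(2)] s_eq by simp
qed

lemma kfaces_finite: "simplicial_complex K \<Longrightarrow> finite (kfaces K j)"
  by (simp add: simplicial_complex_def kfaces_def)

lemma dd_zero:
  fixes K :: "'a::linorder set set"
  assumes sc: "simplicial_complex K"
  shows "boundary K k (boundary K (k+1) h) = (\<lambda>_. 0)"
proof
  fix t
  show "boundary K k (boundary K (k+1) h) t = 0"
  proof (cases "t \<in> kfaces K (k - 1)")
    case False then show ?thesis by (simp add: boundary_def)
  next
    case True
    have fin: "\<And>j. finite (kfaces K j)" using kfaces_finite[OF sc] .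
    have inner: "(\<Sum>r\<in>{r\<in>{r\<in>kfaces K k. t \<subseteq> r}. r \<subseteq> s}. sg r t * sg s r) = 0"
      if s: "s \<in> kfaces K (k+1)" for s
    proof (cases "t \<subseteq> s")
      case False
      then have e: "{r\<in>{r\<in>kfaces K k. t \<subseteq> r}. r \<subseteq> s} = {}" by auto
      show ?thesis unfolding e by simp
    next
      case ts: True
      have fs: "finite s" and sK: "s \<in> K" using s sc by (auto simp: kfaces_def simplicial_complex_def)
      have ct: "int (card t) = k" "t \<noteq> {}" using True by (auto simp: kfaces_def)
      have cs: "int (card s) = k + 2" using s by (auto simp: kfaces_def)
      have eq: "{r\<in>{r\<in>kfaces K k. t \<subseteq> r}. r \<subseteq> s} = {r. t \<subseteq> r \<and> r \<subseteq> s \<and> card r = card t + 1}"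
      proof (rule Set.set_eqI, rule iffI)
        fix r assume "r \<in> {r\<in>{r\<in>kfaces K k. t \<subseteq> r}. r \<subseteq> s}"
        then show "r \<in> {r. t \<subseteq> r \<and> r \<subseteq> s \<and> card r = card t + 1}" using ct by (auto simp: kfaces_def)
      next
        fix r assume r: "r \<in> {r. t \<subseteq> r \<and> r \<subseteq> s \<and> card r = card t + 1}"
        then have "r \<in> K" using sK sc by (auto simp: simplicial_complex_def)
        moreover have "r \<noteq> {}" using r ct by auto
        ultimately show "r \<in> {r\<in>{r\<in>kfaces K k. t \<subseteq> r}. r \<subseteq> s}" using r ct by (auto simp: kfaces_def)
      qed
      show ?thesis unfolding eq by (rule two_cancel[OF fs ts]) (use ct cs in linarith)
    qed
    have "boundary K k (boundary K (k+1) h) t =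
      (\<Sum>r\<in>{r\<in>kfaces K k. t \<subseteq> r}. \<Sum>s\<in>{s\<in>kfaces K (k+1). r \<subseteq> s}. sg r t * (sg s r * h s))"
      using True by (auto simp: boundary_def sum_distrib_left sg_def intro!: sum.cong)
    also have "\<dots> = (\<Sum>s\<in>kfaces K (k+1). \<Sum>r\<in>{r\<in>{r\<in>kfaces K k. t \<subseteq> r}. r \<subseteq> s}. sg r t * (sg s r * h s))"
      by (rule sum.swap_restrict) (use fin in auto)
    also have "\<dots> = (\<Sum>s\<in>kfaces K (k+1). h s * (\<Sum>r\<in>{r\<in>{r\<in>kfaces K k. t \<subseteq> r}. r \<subseteq> s}. sg r t * sg s r))"
      by (simp add: sum_distrib_left algebra_simps)
    also have "\<dots> = 0" using inner by simp
    finally show ?thesis .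
  qed
qed



definition eps :: "('a::linorder \<Rightarrow> 'b::linorder) \<Rightarrow> 'a set \<Rightarrow> int" where
  "eps c s = (\<Prod>u\<in>s. \<Prod>v\<in>s. (if u < v \<and> c v < c u then -1 else 1))"

lemma pow_card_prod:
  assumes "finite A"
  shows "(-1::int) ^ card {u\<in>A. P u} = (\<Prod>u\<in>A. if P u then -1 else 1)"
  using prod.inter_filter[OF assms, of "\<lambda>_. (-1::int)" P] by simp

lemma eps_insert:
  assumes ft: "finite t" and wt: "w \<notin> t"
  shows "eps c (insert w t) = eps c t * (\<Prod>v\<in>t. (if w < v \<and> c v < c w then -1 else 1))
                                     * (\<Prod>u\<in>t. (if u < w \<and> c w < c u then -1 else 1))"
proof -
  let ?g = "\<lambda>u v. (if u < v \<and> c v < c u then -1 else 1::int)"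
  have "eps c (insert w t) = (\<Prod>v\<in>insert w t. ?g w v) * (\<Prod>u\<in>t. \<Prod>v\<in>insert w t. ?g u v)"
    unfolding eps_def using ft wt by simp
  also have "\<dots> = (\<Prod>v\<in>t. ?g w v) * (\<Prod>u\<in>t. ?g u w * (\<Prod>v\<in>t. ?g u v))"
    using ft wt by simp
  also have "\<dots> = (\<Prod>v\<in>t. ?g w v) * ((\<Prod>u\<in>t. ?g u w) * eps c t)"
    by (simp add: prod.distrib eps_def)
  finally show ?thesis by (simp add: algebra_simps)
qed

lemma sign_lemma:
  fixes c :: "'a::linorder \<Rightarrow> 'b::linorder"
  assumes ft: "finite t" and wt: "w \<notin> t" and inj: "inj_on c (insert w t)"
  shows "sg (c ` insert w t) (c ` t) * eps c (insert w t) = eps c t * sg (insert w t) t"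
proof -
  let ?s = "insert w t"
  have cw: "c w \<notin> c ` t" using inj wt by (auto simp: inj_on_def)
  have d1: "?s - t = {w}" using wt by auto
  have d2: "c ` ?s - c ` t = {c w}" using cw by auto
  have im: "{U\<in>c ` ?s. U < c w} = c ` {u\<in>?s. c u < c w}" by auto
  have cardim: "card (c ` {u\<in>?s. c u < c w}) = card {u\<in>?s. c u < c w}"
    by (rule card_image) (rule inj_on_subset[OF inj], auto)
  have f1: "{u\<in>?s. c u < c w} = {u\<in>t. c u < c w}" by auto
  have f2: "{u\<in>?s. u < w} = {u\<in>t. u < w}" by auto
  have s1: "sg (c ` ?s) (c ` t) = (\<Prod>u\<in>t. if c u < c w then -1 else 1)"
    unfolding sg_def d2 the_elem_eq im unfolding cardim unfolding f1 using ft by (rule pow_card_prod)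
  have s2: "sg ?s t = (\<Prod>u\<in>t. if u < w then -1 else 1)"
    unfolding sg_def d1 the_elem_eq f2 using ft by (rule pow_card_prod)
  have pw: "(if c u < c w then -1 else 1) * ((if w < u \<and> c u < c w then -1 else 1)
         * (if u < w \<and> c w < c u then -1 else 1)) = (if u < w then -1 else (1::int))" if u: "u \<in> t" for u
  proof -
    have "u \<noteq> w" using u wt by auto
    moreover have "c u \<noteq> c w" using u cw by (metis image_eqI)
    ultimately show ?thesis by (cases "u < w"; cases "c u < c w") (auto simp: not_less_iff_gr_or_eq)
  qed
  have "sg (c ` ?s) (c ` t) * eps c ?s
    = eps c t * ((\<Prod>u\<in>t. if c u < c w then -1 else 1) * ((\<Prod>v\<in>t. (if w < v \<and> c v < c w then -1 else 1))
                                     * (\<Prod>u\<in>t. (if u < w \<and> c w < c u then -1 else 1))))"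
    unfolding s1 eps_insert[OF ft wt] by (simp add: algebra_simps)
  also have "\<dots> = eps c t * (\<Prod>u\<in>t. if u < w then -1 else 1)"
    unfolding prod.distrib[symmetric] using pw by (simp cong: prod.cong)
  finally show ?thesis unfolding s2 .
qed

lemma eps_sq: "eps c s * eps c s = 1"
proof -
  have "\<bar>eps c s\<bar> = 1" unfolding eps_def
    by (simp add: abs_prod prod.neutral)
  then show ?thesis by (metis abs_mult_self_eq mult_1_left)
qed



locale pc =
  fixes K :: "'a::linorder set set" and c :: "'a \<Rightarrow> 'b::linorder" and d :: nat
  assumes sc: "simplicial_complex K"
    and pr: "proper_coloring K c"
    and d1: "d \<ge> 1"
    and pinj: "\<forall>s\<in>kfaces K (int d - 1). \<forall>t\<in>kfaces K (int d - 1).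
           pattern c s = pattern c t \<longrightarrow> s = t"
begin

abbreviation "Y \<equiv> pattern_complex K c"

lemma finK: "s \<in> K \<Longrightarrow> finite s"
  using sc by (auto simp: simplicial_complex_def)

lemma subK: "s \<in> K \<Longrightarrow> t \<subseteq> s \<Longrightarrow> t \<in> K"
  using sc by (auto simp: simplicial_complex_def)

lemma injc: assumes "s \<in> K" shows "inj_on c s"
proof (rule inj_onI)
  fix u v assume uv: "u \<in> s" "v \<in> s" "c u = c v"
  show "u = v"
  proof (rule ccontr)
    assume "u \<noteq> v"
    moreover have "{u, v} \<in> K" using subK[OF assms] uv by auto
    ultimately show False using pr uv(3) by (auto simp: proper_coloring_def)
  qed
qed

lemma pat: "s \<in> K \<Longrightarrow> pattern c s = mset_set (c ` s)"
  by (simp add: pattern_def image_mset_mset_set[OF injc])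

lemma Yeq: "Y = (`) c ` K"
proof (rule Set.set_eqI, rule iffI)
  fix S assume "S \<in> Y"
  then obtain s where s: "finite S" "s \<in> K" "mset_set S = pattern c s"
    by (auto simp: pattern_complex_def)
  then have e: "mset_set S = mset_set (c ` s)" using pat by simp
  have "S = set_mset (mset_set S)" using s(1) by simp
  also have "\<dots> = set_mset (mset_set (c ` s))" using e by (simp only:)
  also have "\<dots> = c ` s" using finK[OF s(2)] by simp
  finally have "S = c ` s" .
  then show "S \<in> (`) c ` K" using s by blast
next
  fix S assume "S \<in> (`) c ` K"
  then obtain s where "s \<in> K" "S = c ` s" by blast
  then show "S \<in> Y" using pat finK by (auto simp: pattern_complex_def)
qed

lemma Ysc: "simplicial_complex Y"
  unfolding simplicial_complex_def
proof (intro conjI ballI allI impI)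
  show "finite Y" unfolding Yeq using sc by (simp add: simplicial_complex_def)
next
  fix S assume "S \<in> Y" then show "finite S" unfolding Yeq using finK by auto
next
  fix S T assume "S \<in> Y" "T \<subseteq> S"
  then obtain s where s: "s \<in> K" "S = c ` s" unfolding Yeq by blast
  have "T = c ` {u\<in>s. c u \<in> T}" using s \<open>T \<subseteq> S\<close> by auto
  moreover have "{u\<in>s. c u \<in> T} \<in> K" using subK[OF s(1)] by auto
  ultimately show "T \<in> Y" unfolding Yeq by blast
qed

lemma cardc: "s \<in> K \<Longrightarrow> card (c ` s) = card s"
  using card_image[OF injc] .

lemma kfY: "kfaces Y j = (`) c ` kfaces K j"
proof (rule Set.set_eqI, rule iffI)
  fix S assume "S \<in> kfaces Y j"
  then obtain s where s: "s \<in> K" "S = c ` s" "S \<noteq> {}" "int (card S) = j + 1"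
    unfolding kfaces_def Yeq by blast
  then have "s \<in> kfaces K j" using cardc[OF s(1)] by (auto simp: kfaces_def)
  then show "S \<in> (`) c ` kfaces K j" using s by blast
next
  fix S assume "S \<in> (`) c ` kfaces K j"
  then obtain s where s: "s \<in> kfaces K j" "S = c ` s" by blast
  then show "S \<in> kfaces Y j" using cardc[of s] unfolding kfaces_def Yeq by auto
qed

lemma inj1: "inj_on ((`) c) (kfaces K (int d - 1))"
proof (rule inj_onI)
  fix s t assume st: "s \<in> kfaces K (int d - 1)" "t \<in> kfaces K (int d - 1)" "c ` s = c ` t"
  then have "pattern c s = pattern c t" using pat by (simp add: kfaces_def)
  then show "s = t" using pinj st by blast
qed

lemma sub_lemma:
  assumes t: "t \<in> kfaces K (int d - 1)" and s: "s \<in> K" and ts: "c ` t \<subseteq> c ` s"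
  shows "t \<subseteq> s"
proof -
  define t' where "t' = {u\<in>s. c u \<in> c ` t}"
  have "c ` t \<subseteq> c ` t'"
  proof
    fix y assume "y \<in> c ` t"
    then have y: "y \<in> c ` t" "y \<in> c ` s" using ts by auto
    then obtain u where "u \<in> s" "y = c u" by blast
    then have "u \<in> t'" using y by (auto simp: t'_def)
    then show "y \<in> c ` t'" using \<open>y = c u\<close> by blast
  qed
  then have ct': "c ` t' = c ` t" by (auto simp: t'_def)
  have t'K: "t' \<in> K" using subK[OF s] by (auto simp: t'_def)
  have "card t' = card t" using cardc[OF t'K] cardc[of t] t ct' by (auto simp: kfaces_def)
  moreover have "t' \<noteq> {}" using ct' t by (auto simp: kfaces_def)
  ultimately have "t' \<in> kfaces K (int d - 1)" using t t'K by (auto simp: kfaces_def)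
  then have "t' = t" using inj1 t ct' by (auto dest: inj_onD)
  then show ?thesis by (auto simp: t'_def)
qed

lemma inj2: "inj_on ((`) c) (kfaces K (int d))"
proof -
  have sub: "s \<subseteq> s'" if s: "s \<in> kfaces K (int d)" "s' \<in> kfaces K (int d)" "c ` s = c ` s'" for s s'
  proof
    fix u assume u: "u \<in> s"
    have fs: "finite s" using s finK by (auto simp: kfaces_def)
    have cs: "card s = d + 1" using s by (auto simp: kfaces_def)
    obtain v where v: "v \<in> s" "v \<noteq> u"
    proof (rule ccontr)
      assume "\<not> thesis"
      with that have "s \<subseteq> {u}" by blast
      then have "card s \<le> 1" using card_mono[of "{u}" s] by simp
      then show False using cs d1 by simp
    qed
    let ?t = "s - {v}"
    have tK: "?t \<in> K" using subK s by (auto simp: kfaces_def)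
    have "card ?t = d" using cs v fs by simp
    moreover have "?t \<noteq> {}" using u v by auto
    ultimately have "?t \<in> kfaces K (int d - 1)" using tK by (auto simp: kfaces_def)
    moreover have "c ` ?t \<subseteq> c ` s'" using s(3) by blast
    ultimately have "?t \<subseteq> s'" using sub_lemma s(2) by (auto simp: kfaces_def)
    then show "u \<in> s'" using u v by blast
  qed
  show ?thesis by (rule inj_onI) (use sub in blast)
qed

definition pre :: "int \<Rightarrow> 'b set \<Rightarrow> 'a set" where
  "pre j S = the_inv_into (kfaces K j) ((`) c) S"

definition phi :: "int \<Rightarrow> ('a set \<Rightarrow> int) \<Rightarrow> ('b set \<Rightarrow> int)" where
  "phi j f = (\<lambda>S. if S \<in> kfaces Y j then eps c (pre j S) * f (pre j S) else 0)"

lemma pre_f: "inj_on ((`) c) (kfaces K j) \<Longrightarrow> s \<in> kfaces K j \<Longrightarrow> pre j (c ` s) = s"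
  unfolding pre_def by (rule the_inv_into_f_f)

lemma pre_in: assumes "inj_on ((`) c) (kfaces K j)" "S \<in> kfaces Y j"
  shows "pre j S \<in> kfaces K j" "c ` pre j S = S"
  using assms the_inv_into_into[OF assms(1), of S "kfaces K j"] f_the_inv_into_f[OF assms(1), of S]
  unfolding pre_def kfY by auto

lemma phi_f: "inj_on ((`) c) (kfaces K j) \<Longrightarrow> s \<in> kfaces K j \<Longrightarrow> phi j f (c ` s) = eps c s * f s"
  unfolding phi_def kfY using pre_f by auto

lemma phi_add: "phi j (\<lambda>s. f s + g s) = (\<lambda>S. phi j f S + phi j g S)"
  by (auto simp: phi_def fun_eq_iff algebra_simps)

lemma phi_bij:
  assumes inj: "inj_on ((`) c) (kfaces K j)"
  shows "bij_betw (phi j) (carrier (chain_group K j)) (carrier (chain_group Y j))"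
proof (rule bij_betw_byWitness[where f'="\<lambda>G s. if s \<in> kfaces K j then eps c s * G (c ` s) else 0"])
  show "\<forall>f\<in>carrier (chain_group K j). (\<lambda>s. if s \<in> kfaces K j then eps c s * phi j f (c ` s) else 0) = f"
  proof (intro ballI ext)
    fix f s assume f: "f \<in> carrier (chain_group K j)"
    show "(if s \<in> kfaces K j then eps c s * phi j f (c ` s) else 0) = f s"
    proof (cases "s \<in> kfaces K j")
      case True
      then show ?thesis using phi_f[OF inj True] eps_sq[of c s] by (simp add: mult.assoc[symmetric])
    next
      case False then show ?thesis using f by (simp add: cg_carrier)
    qed
  qed
next
  show "\<forall>G\<in>carrier (chain_group Y j). phi j (\<lambda>s. if s \<in> kfaces K j then eps c s * G (c ` s) else 0) = G"
  proof (intro ballI ext)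
    fix G S assume G: "G \<in> carrier (chain_group Y j)"
    show "phi j (\<lambda>s. if s \<in> kfaces K j then eps c s * G (c ` s) else 0) S = G S"
    proof (cases "S \<in> kfaces Y j")
      case True
      note p = pre_in[OF inj True]
      show ?thesis using True p eps_sq[of c "pre j S"] unfolding phi_def
        by (simp add: mult.assoc[symmetric])
    next
      case False then show ?thesis using G by (simp add: cg_carrier phi_def)
    qed
  qed
next
  show "phi j ` carrier (chain_group K j) \<subseteq> carrier (chain_group Y j)"
    by (auto simp: cg_carrier phi_def)
next
  show "(\<lambda>G s. if s \<in> kfaces K j then eps c s * G (c ` s) else 0) ` carrier (chain_group Y j)
        \<subseteq> carrier (chain_group K j)"
    by (auto simp: cg_carrier)
qed

lemma chain_map: "boundary Y (int d) (phi (int d) g) = phi (int d - 1) (boundary K (int d) g)"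
proof
  fix T
  show "boundary Y (int d) (phi (int d) g) T = phi (int d - 1) (boundary K (int d) g) T"
  proof (cases "T \<in> kfaces Y (int d - 1)")
    case False then show ?thesis by (simp add: boundary_def phi_def)
  next
    case True
    note p = pre_in[OF inj1 True]
    define t where "t = pre (int d - 1) T"
    have t: "t \<in> kfaces K (int d - 1)" "c ` t = T" using p by (auto simp: t_def)
    define A where "A = {s\<in>kfaces K (int d). t \<subseteq> s}"
    have injA: "inj_on ((`) c) A" using inj_on_subset[OF inj2] by (auto simp: A_def)
    have imA: "(`) c ` A = {S\<in>kfaces Y (int d). T \<subseteq> S}"
    proof (rule Set.set_eqI, rule iffI)
      fix S assume "S \<in> (`) c ` A"
      then show "S \<in> {S\<in>kfaces Y (int d). T \<subseteq> S}" using t(2) by (auto simp: A_def kfY)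
    next
      fix S assume S: "S \<in> {S\<in>kfaces Y (int d). T \<subseteq> S}"
      then obtain s where s: "s \<in> kfaces K (int d)" "S = c ` s" by (auto simp: kfY)
      then have "t \<subseteq> s" using sub_lemma[OF t(1)] S t(2) by (auto simp: kfaces_def)
      then show "S \<in> (`) c ` A" using s by (auto simp: A_def)
    qed
    have tm: "sg (c ` s) T * phi (int d) g (c ` s) = eps c t * (sg s t * g s)" if s: "s \<in> A" for s
    proof -
      have sK: "s \<in> kfaces K (int d)" and ts: "t \<subseteq> s" using s by (auto simp: A_def)
      have fs: "finite s" using sK finK by (auto simp: kfaces_def)
      have "card s = card t + 1" using sK t(1) by (auto simp: kfaces_def)
      then have "card (s - t) = 1" using fs ts by (simp add: card_Diff_subset finite_subset)
      then obtain w where w: "s - t = {w}" by (rule card_1_singletonE)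
      have s_eq: "s = insert w t" and wt: "w \<notin> t" using w ts by auto
      have ft: "finite t" using fs ts finite_subset by blast
      have inj: "inj_on c (insert w t)" using injc sK s_eq by (auto simp: kfaces_def)
      have "sg (c ` s) T * phi (int d) g (c ` s) = (sg (c ` s) (c ` t) * eps c s) * g s"
        using phi_f[OF inj2 sK] t(2) by simp
      also have "\<dots> = eps c t * sg s t * g s" using sign_lemma[OF ft wt inj] s_eq by simp
      finally show ?thesis by simp
    qed
    have "boundary Y (int d) (phi (int d) g) T = (\<Sum>S\<in>{S\<in>kfaces Y (int d). T \<subseteq> S}. sg S T * phi (int d) g S)"
      using True by (simp add: boundary_def sg_def)
    also have "\<dots> = (\<Sum>s\<in>A. sg (c ` s) T * phi (int d) g (c ` s))"
      unfolding imA[symmetric] by (simp add: sum.reindex[OF injA])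
    also have "\<dots> = (\<Sum>s\<in>A. eps c t * (sg s t * g s))" using tm by simp
    also have "\<dots> = eps c t * boundary K (int d) g t"
      using t(1) by (simp add: boundary_def sg_def A_def sum_distrib_left)
    also have "\<dots> = phi (int d - 1) (boundary K (int d) g) T"
      using True by (simp add: phi_def t_def)
    finally show ?thesis .
  qed
qed

lemma main: "torsion_subgroup (homology K (int d - 1))
           \<cong> torsion_subgroup (homology Y (int d - 1))"
proof (rule torsion_iso[where \<phi> = "phi (int d - 1)"])
  show "\<And>h. boundary K (int d - 1) (boundary K (int d - 1 + 1) h) = (\<lambda>_. 0)"
    by (rule dd_zero[OF sc])
  show "\<And>h. boundary Y (int d - 1) (boundary Y (int d - 1 + 1) h) = (\<lambda>_. 0)"
    by (rule dd_zero[OF Ysc])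
  show "bij_betw (phi (int d - 1)) (carrier (chain_group K (int d - 1))) (carrier (chain_group Y (int d - 1)))"
    by (rule phi_bij[OF inj1])
  show "\<And>f g. phi (int d - 1) (\<lambda>s. f s + g s) = (\<lambda>s. phi (int d - 1) f s + phi (int d - 1) g s)"
    by (rule phi_add)
  have "phi (int d - 1) ` boundaries K (int d - 1) = phi (int d - 1) ` boundary K (int d) ` carrier (chain_group K (int d))"
    by (simp add: boundaries_def)
  also have "\<dots> = (\<lambda>g. boundary Y (int d) (phi (int d) g)) ` carrier (chain_group K (int d))"
    by (simp add: image_image chain_map)
  also have "\<dots> = boundary Y (int d) ` (phi (int d) ` carrier (chain_group K (int d)))"
    by (simp add: image_image)
  also have "\<dots> = boundary Y (int d) ` carrier (chain_group Y (int d))"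
    using bij_betw_imp_surj_on[OF phi_bij[OF inj2]] by simp
  also have "\<dots> = boundaries Y (int d - 1)" by (simp add: boundaries_def)
  finally show "phi (int d - 1) ` boundaries K (int d - 1) = boundaries Y (int d - 1)" .
qed

end

lemma kfaces_neg:
  assumes "\<forall>s\<in>K. finite s" shows "kfaces K (-1) = {}"
  using assms by (auto simp: kfaces_def)

lemma cg_neg: assumes "\<forall>s\<in>K. finite s" shows "carrier (chain_group K (-1)) = {\<lambda>_. 0}"
  using kfaces_neg[OF assms] by (auto simp: cg_carrier)

lemma bd_neg: assumes "\<forall>s\<in>K. finite s" shows "boundaries K (-1) = {\<lambda>_. 0}"
proof -
  have "boundary K 0 f = (\<lambda>_. 0)" for f using kfaces_neg[OF assms] by (simp add: boundary_def)
  moreover have "(\<lambda>_. 0) \<in> carrier (chain_group K 0)" by (simp add: cg_carrier)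
  ultimately show ?thesis by (auto simp: boundaries_def)
qed

lemma case0:
  fixes K :: "'a::linorder set set" and L :: "'b::linorder set set"
  assumes fK: "\<forall>s\<in>K. finite s" and fL: "\<forall>s\<in>L. finite s"
  shows "torsion_subgroup (homology K (-1)) \<cong> torsion_subgroup (homology L (-1))"
proof (rule torsion_iso[where \<phi> = "\<lambda>f. (\<lambda>_. 0)"])
  show "\<And>h. boundary K (-1) (boundary K (-1 + 1) h) = (\<lambda>_. 0)"
    by (auto simp: boundary_def kfaces_def)
  show "\<And>h. boundary L (-1) (boundary L (-1 + 1) h) = (\<lambda>_. 0)"
    by (auto simp: boundary_def kfaces_def)
  show "bij_betw (\<lambda>f. (\<lambda>_. 0)) (carrier (chain_group K (-1))) (carrier (chain_group L (-1)))"
    unfolding cg_neg[OF fK] cg_neg[OF fL] by (simp add: bij_betw_def)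
  show "\<And>f g. (\<lambda>_. 0) = (\<lambda>s. (0::int) + 0)" by simp
  show "(\<lambda>f. (\<lambda>_. 0)) ` boundaries K (-1) = boundaries L (-1)"
    unfolding bd_neg[OF fK] bd_neg[OF fL] by simp
qed

theorem lemma2:
  fixes K :: "'a::linorder set set" and c :: "'a \<Rightarrow> 'b::linorder" and d :: nat
  assumes "simplicial_complex K"
    and "dimension_is K d"
    and "proper_coloring K c"
    and "\<forall>s\<in>kfaces K (int d - 1). \<forall>t\<in>kfaces K (int d - 1).
           pattern c s = pattern c t \<longrightarrow> s = t"
  shows "torsion_subgroup (homology K (int d - 1))
           \<cong> torsion_subgroup (homology (pattern_complex K c) (int d - 1))"
proof (cases "d = 0")
  case True
  have fK: "\<forall>s\<in>K. finite s" using assms(1) by (simp add: simplicial_complex_def)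
  have fL: "\<forall>s\<in>pattern_complex K c. finite s" by (simp add: pattern_complex_def)
  show ?thesis using case0[OF fK fL] True by simp
next
  case False
  then interpret pc K c d using assms by (unfold_locales) auto
  show ?thesis by (rule main)
qed

end
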